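(* Let $u,c,d,v,w$ be points on the unit circle $\partial\mathbb{B}^2$, occurring in this order along the circle. Let $a=\mathrm{LIS}[u,v,c,w]$ and $b=\mathrm{LIS}[u,v,d,w]$. Then: (1) $|u,a,b,v|=|u,c,d,v|$. (2) The function $F(z)=\mathrm{LIS}[u,v,z,w]$ maps the arc of the unit circle with endpoints $u$ and $v$ that contains $c,d$ onto the segment $[u,v]$, and it is the restriction of the Möbius transformation \[ F(z)=\frac{(uv-uw-vw)z+uvw}{-wz+uv}. \] In particular $F(u)=u$, $F(v)=v$, $a=F(c)$ and $b=F(d)$. (3) If the lines $L[u,v]$ and $L[c,d]$ are parallel, then $uv=cd$ and \[ a=\frac{(u+v-d)w-cd}{w-d},\qquad b=\frac{(u+v-c)w-cd}{w-c}. \]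
   Context: Points of $\mathbb{R}^2$ are identified with complex numbers. $L[x,y]$ is the line through $x\ne y$; $\mathrm{LIS}[x,y,z,t]$ denotes the intersection point of the lines $L[x,y]$ and $L[z,t]$ (when it is a single point). For points $x,y,z,t$, $|x,y,z,t|=\frac{|x-z||y-t|}{|x-y||z-t|}$. *)

theory Defs
  imports "HOL-Analysis.Analysis"
begin

definition Lline :: "complex \<Rightarrow> complex \<Rightarrow> complex set" where
  "Lline x y = {z. \<exists>t::real. z = x + of_real t * (y - x)}"

text \<open>Intersection point of the lines L[x,y] and L[z,t] (meaningful when unique).\<close>
definition LIS :: "complex \<Rightarrow> complex \<Rightarrow> complex \<Rightarrow> complex \<Rightarrow> complex" where
  "LIS x y z t = (THE p. p \<in> Lline x y \<and> p \<in> Lline z t)"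

definition abs_cross_ratio :: "complex \<Rightarrow> complex \<Rightarrow> complex \<Rightarrow> complex \<Rightarrow> real" where
  "abs_cross_ratio x y z t = (cmod (x - z) * cmod (y - t)) / (cmod (x - y) * cmod (z - t))"

definition ccw3 :: "complex \<Rightarrow> complex \<Rightarrow> complex \<Rightarrow> bool" where
  "ccw3 x y z \<longleftrightarrow> cmod x = 1 \<and>
     (\<exists>s t. 0 < s \<and> s < t \<and> t < 2 * pi \<and> y = x * cis s \<and> z = x * cis t)"

definition ccw5 :: "complex \<Rightarrow> complex \<Rightarrow> complex \<Rightarrow> complex \<Rightarrow> complex \<Rightarrow> bool" where
  "ccw5 p1 p2 p3 p4 p5 \<longleftrightarrow> cmod p1 = 1 \<and>
     (\<exists>s2 s3 s4 s5. 0 < s2 \<and> s2 < s3 \<and> s3 < s4 \<and> s4 < s5 \<and> s5 < 2 * pi \<and>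
        p2 = p1 * cis s2 \<and> p3 = p1 * cis s3 \<and> p4 = p1 * cis s4 \<and> p5 = p1 * cis s5)"

definition in_order5 :: "complex \<Rightarrow> complex \<Rightarrow> complex \<Rightarrow> complex \<Rightarrow> complex \<Rightarrow> bool" where
  "in_order5 p1 p2 p3 p4 p5 \<longleftrightarrow> ccw5 p1 p2 p3 p4 p5 \<or> ccw5 p5 p4 p3 p2 p1"

definition arc_ccw :: "complex \<Rightarrow> complex \<Rightarrow> complex set" where
  "arc_ccw x y = {z. cmod z = 1 \<and> (z = x \<or> z = y \<or> ccw3 x z y)}"

definition arc_containing :: "complex \<Rightarrow> complex \<Rightarrow> complex \<Rightarrow> complex set" where
  "arc_containing x y c = (if ccw3 x c y then arc_ccw x y else arc_ccw y x)"

definition parallel_lines :: "complex \<Rightarrow> complex \<Rightarrow> complex \<Rightarrow> complex \<Rightarrow> bool" where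
  "parallel_lines x y z t \<longleftrightarrow> (\<exists>k::real. y - x = of_real k * (t - z))"

end

theory Submission imports Defs begin

lemma unit_cnj: "cmod u = 1 \<Longrightarrow> cnj u = 1 / u"
proof -
  assume h: "cmod u = 1"
  have "u * cnj u = 1" using complex_norm_square[of u] h by simp
  moreover have "u \<noteq> 0" using h by auto
  ultimately show ?thesis by (simp add: field_simps)
qed

lemma Lline_unit:
  assumes "cmod u = 1" "cmod v = 1" "u \<noteq> v"
  shows "p \<in> Lline u v \<longleftrightarrow> p + u * v * cnj p = u + v"
proof
  have u0: "u \<noteq> 0" "v \<noteq> 0" using assms by auto
  assume "p \<in> Lline u v"
  then obtain t::real where p: "p = u + of_real t * (v - u)" unfolding Lline_def by auto
  have cu: "cnj u = 1/u" "cnj v = 1/v" using unit_cnj assms by auto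
  show "p + u * v * cnj p = u + v" unfolding p using u0
    by (simp add: cu field_simps)
next
  have u0: "u \<noteq> 0" "v \<noteq> 0" "v - u \<noteq> 0" using assms by auto
  assume h: "p + u * v * cnj p = u + v"
  define q where "q = (p - u) / (v - u)"
  have cp: "cnj p = (u + v - p) / (u * v)" using h u0 by (simp add: field_simps)
  have "cnj q = (cnj p - 1/u) / (1/v - 1/u)" unfolding q_def using unit_cnj[OF assms(1)] unit_cnj[OF assms(2)] by simp
  also have "\<dots> = q" unfolding cp q_def using u0 assms(3) by (simp add: field_simps)
  finally have "cnj q = q" .
  then have "q = of_real (Re q)" by (metis Reals_cnj_iff complex_is_Real_iff of_real_Re)
  moreover have "p = u + q * (v - u)" unfolding q_def using u0 by simp
  ultimately show "p \<in> Lline u v" unfolding Lline_def by (metis (mono_tags) mem_Collect_eq)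
qed

lemma LIS_unit:
  assumes "cmod u = 1" "cmod v = 1" "cmod z = 1" "cmod w = 1" "u \<noteq> v" "z \<noteq> w"
    "u * v \<noteq> z * w"
  shows "LIS u v z w = ((u * v - u * w - v * w) * z + u * v * w) / (u * v - w * z)"
proof -
  have n0: "u \<noteq> 0" "v \<noteq> 0" "z \<noteq> 0" "w \<noteq> 0" "u * v - w * z \<noteq> 0" "u * v - z * w \<noteq> 0"
    using assms by (auto simp: mult.commute)
  have cu: "cnj u = 1/u" "cnj v = 1/v" "cnj z = 1/z" "cnj w = 1/w" using unit_cnj assms by auto
  define P where "P = ((u * v - u * w - v * w) * z + u * v * w) / (u * v - w * z)"
  have cP: "cnj P = (u + v - z - w) / (u * v - z * w)"
    unfolding P_def using n0 by (simp add: cu field_simps)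
  have D: "u * v - z * w = u * v - w * z" by (simp add: mult.commute)
  have L1: "P \<in> Lline u v" proof -
  have "P + u * v * cnj P = (((u * v - u * w - v * w) * z + u * v * w) + u * v * (u + v - z - w)) / (u * v - w * z)"
    unfolding cP D unfolding P_def by (simp add: add_divide_distrib)
  also have "\<dots> = ((u + v) * (u * v - w * z)) / (u * v - w * z)" by (rule arg_cong[where f="\<lambda>x. x / _"]) algebra
  also have "\<dots> = u + v" using n0 by simp
  finally show "P \<in> Lline u v" unfolding Lline_unit[OF assms(1,2,5)] .
  qed
  have L2: "P \<in> Lline z w" proof -
  have "P + z * w * cnj P = (((u * v - u * w - v * w) * z + u * v * w) + z * w * (u + v - z - w)) / (u * v - w * z)"
    unfolding cP D unfolding P_def by (simp add: add_divide_distrib)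
  also have "\<dots> = ((z + w) * (u * v - w * z)) / (u * v - w * z)" by (rule arg_cong[where f="\<lambda>x. x / _"]) algebra
  also have "\<dots> = z + w" using n0 by simp
  finally show "P \<in> Lline z w" unfolding Lline_unit[OF assms(3,4,6)] .
  qed
 have uniq: "p = P" if "p \<in> Lline u v" "p \<in> Lline z w" for p
  proof -
    have e: "p + u * v * cnj p = u + v" "p + z * w * cnj p = z + w"
      using that Lline_unit[OF assms(1,2,5)] Lline_unit[OF assms(3,4,6)] by simp_all
    have "(u * v - z * w) * cnj p = (p + u * v * cnj p) - (p + z * w * cnj p)" by (simp add: algebra_simps)
    also have "\<dots> = u + v - z - w" unfolding e by simp
    finally have "(u * v - z * w) * cnj p = u + v - z - w" .
    then have "cnj p = cnj P" unfolding cP using n0 by (simp add: field_simps)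
    then show ?thesis by simp
  qed
  have "LIS u v z w = P" unfolding LIS_def
    by (rule the_equality) (use L1 L2 uniq in blast)+
  then show ?thesis unfolding P_def .
qed

lemma cis_neq:
  assumes "0 < \<bar>x - y\<bar>" "\<bar>x - y\<bar> < 2 * pi"
  shows "cis x \<noteq> cis y"
proof
  assume "cis x = cis y"
  then have "cis (x - y) = 1" by (simp add: cis_divide[symmetric])
  then have "cos (x - y) = 1" by (metis Re_complex_of_real cis.sel(1) one_complex.sel(1))
  from cos_one_2pi_int[THEN iffD1, OF this] obtain n :: int where n: "x - y = real_of_int n * 2 * pi" by blast
  then have "0 < \<bar>real_of_int n\<bar> * (2*pi)" "\<bar>real_of_int n\<bar> * (2 * pi) < 1 * (2 * pi)"
    using assms by (simp_all add: abs_mult)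
  then have "0 < \<bar>real_of_int n\<bar>" "\<bar>real_of_int n\<bar> < 1"
    by (simp_all add: zero_less_mult_iff)
  then show False by simp
qed

lemma cis_inj: "\<bar>x - y\<bar> < 2 * pi \<Longrightarrow> cis x = cis y \<Longrightarrow> x = y"
  using cis_neq[of x y] by (cases "x = y") auto

lemma sin_cis: "complex_of_real (sin x) = (cis x - 1 / cis x) / (2 * \<i>)"
proof -
  have "1 / cis x = cis (-x)" by (simp add: inverse_eq_divide[symmetric])
  moreover have "cis x - cis (-x) = complex_of_real (sin x) * (2 * \<i>)" by (simp add: complex_eq_iff)
  ultimately have h: "cis x - 1 / cis x = (2 * \<i>) * complex_of_real (sin x)" by simp
  show ?thesis unfolding h by simp
qed

lemma alg_F:
  fixes u Z W V :: complex
  assumes "u \<noteq> 0" "Z * W \<noteq> V" "V \<noteq> 1"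
  shows "((u * (u * V) - u * (u * W) - (u * V) * (u * W)) * (u * Z) + u * (u * V) * (u * W)) / (u * (u * V) - (u * W) * (u * Z))
     = u + ((Z - 1) * (W - 1) * V / ((Z * W - V) * (V - 1))) * (u * V - u)"
proof -
  define T where "T = (Z - 1) * (W - 1) * V / ((Z * W - V) * (V - 1))"
  have d2: "Z * W - V \<noteq> 0" "V - 1 \<noteq> 0" using assms by auto
  have hT: "T * ((Z * W - V) * (V - 1)) = (Z - 1) * (W - 1) * V" unfolding T_def using d2 by simp
  have d1: "u * (u * V) - (u * W) * (u * Z) \<noteq> 0"
  proof
    assume "u * (u * V) - (u * W) * (u * Z) = 0"
    then have "(u * u) * (Z * W - V) = 0" by algebra
    then show False using d2 assms(1) by simp
  qed
  have "(u * (u * V) - u * (u * W) - (u * V) * (u * W)) * (u * Z) + u * (u * V) * (u * W)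
     = (u + T * (u * V - u)) * (u * (u * V) - (u * W) * (u * Z))" using hT by algebra
  then show ?thesis unfolding T_def[symmetric] using d1 by (simp add: nonzero_divide_eq_eq)
qed

lemma div4_cancel:
  fixes A B C D k :: complex
  assumes "k \<noteq> 0"
  shows "(A / k) * (B / k) / ((C / k) * (D / k)) = (A * B) / (C * D)"
proof (cases "C * D = 0")
  case True then show ?thesis by auto
next
  case False then show ?thesis using assms by (simp add: field_simps)
qed

lemma frac_ace:
  fixes A B C D a c e :: complex
  assumes "a \<noteq> 0" "c \<noteq> 0" "e \<noteq> 0"
  shows "((A / a) * (B / c)) / ((C / (a * c * e)) * (D / e)) = (A * B * (e * e)) / (C * D)"
proof (cases "C * D = 0")
  case True then show ?thesis by auto
next
  case False then show ?thesis using assms by (simp add: field_simps)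
qed

definition Tf :: "real \<Rightarrow> real \<Rightarrow> real \<Rightarrow> real" where
  "Tf z w b = sin (z/2) * sin (w/2) / (sin ((w + z - b)/2) * sin (b/2))"

lemma Tf_complex:
  assumes "sin ((w + z - b)/2) \<noteq> 0" "sin (b/2) \<noteq> 0"
  shows "complex_of_real (Tf z w b) = (cis z - 1) * (cis w - 1) * cis b / ((cis z * cis w - cis b) * (cis b - 1))"
    "cis z * cis w \<noteq> cis b" "cis b \<noteq> 1"
proof -
  define a where "a = cis (z/2)"
  define c where "c = cis (w/2)"
  define e where "e = cis (b/2)"
  have a0: "a \<noteq> 0" "c \<noteq> 0" "e \<noteq> 0" unfolding a_def c_def e_def by auto
  have sq: "cis z = a * a" "cis w = c * c" "cis b = e * e" unfolding a_def c_def e_def cis_mult by simp_all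
  have "(w + z - b)/2 = z/2 + w/2 - b/2" by (simp add: field_simps)
  then have X: "cis ((w + z - b)/2) = a * c / e" unfolding a_def c_def e_def cis_mult cis_divide
    by (simp only:)
  have s1: "complex_of_real (sin ((w + z - b)/2)) = (a * c / e - e / (a * c)) / (2 * \<i>)"
    unfolding sin_cis X by simp
  have s2: "complex_of_real (sin (b/2)) = (e - 1 / e) / (2 * \<i>)" unfolding sin_cis e_def ..
  have s3: "complex_of_real (sin (z/2)) = (a - 1 / a) / (2 * \<i>)" unfolding sin_cis a_def ..
  have s4: "complex_of_real (sin (w/2)) = (c - 1 / c) / (2 * \<i>)" unfolding sin_cis c_def ..
  have n1: "a * c / e - e / (a * c) \<noteq> 0" using assms(1) s1 by auto
  have n2: "e - 1 / e \<noteq> 0" using assms(2) s2 by auto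
  have n1': "a * a * (c * c) - e * e \<noteq> 0"
  proof
    assume "a * a * (c * c) - e * e = 0"
    then have "a * c / e - e / (a * c) = (a * a * (c * c) - e * e) / (a * c * e)" using a0 by (simp add: field_simps)
    then show False using n1 \<open>a * a * (c * c) - e * e = 0\<close> by simp
  qed
  have n2': "e * e - 1 \<noteq> 0"
  proof
    assume "e * e - 1 = 0"
    then have "e - 1 / e = (e * e - 1) / e" using a0 by (simp add: field_simps)
    then show False using n2 \<open>e * e - 1 = 0\<close> by simp
  qed
  show "cis z * cis w \<noteq> cis b" "cis b \<noteq> 1" unfolding sq using n1' n2' by auto
  have "complex_of_real (Tf z w b) = ((a - 1 / a) * (c - 1 / c)) / ((a * c / e - e / (a * c)) * (e - 1 / e))"
    unfolding Tf_def of_real_mult of_real_divide s1 s2 s3 s4 by (rule div4_cancel) simp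
  also have "a - 1 / a = (a * a - 1) / a" using a0 by (simp add: field_simps)
  also have "c - 1 / c = (c * c - 1) / c" using a0 by (simp add: field_simps)
  also have "a * c / e - e / (a * c) = (a * a * (c * c) - e * e) / (a * c * e)" using a0 by (simp add: field_simps)
  also have "e - 1 / e = (e * e - 1) / e" using a0 by (simp add: field_simps)
  also have "((a * a - 1) / a * ((c * c - 1) / c)) / ((a * a * (c * c) - e * e) / (a * c * e) * ((e * e - 1) / e))
     = (a * a - 1) * (c * c - 1) * (e * e) / ((a * a * (c * c) - e * e) * (e * e - 1))"
    using a0 by (rule frac_ace)
  finally show "complex_of_real (Tf z w b) = (cis z - 1) * (cis w - 1) * cis b / ((cis z * cis w - cis b) * (cis b - 1))"
    unfolding sq .
qed

lemma sin_prod_identity: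
  fixes w z b :: real shows
  "sin ((w + z - b)/2) * sin (b/2) - sin (z/2) * sin (w/2) = sin ((b - z)/2) * sin ((w - b)/2)"
proof -
  have e1: "sin ((w + z - b)/2) * sin (b/2) = (cos ((w + z)/2 - b) - cos ((w + z)/2)) / 2"
  proof -
    have "sin ((w + z - b)/2) * sin (b/2) = (cos ((w + z - b)/2 - b/2) - cos ((w + z - b)/2 + b/2)) / 2"
      by (rule sin_times_sin)
    also have "(w + z - b)/2 - b/2 = (w + z)/2 - b" by (simp add: field_simps)
    also have "(w + z - b)/2 + b/2 = (w + z)/2" by (simp add: field_simps)
    finally show ?thesis .
  qed
  have e2: "sin (z/2) * sin (w/2) = (cos ((w - z)/2) - cos ((w + z)/2)) / 2"
  proof -
    have "sin (z/2) * sin (w/2) = (cos (z/2 - w/2) - cos (z/2 + w/2)) / 2"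
      by (rule sin_times_sin)
    also have "z/2 - w/2 = - ((w - z)/2)" by (simp add: field_simps)
    also have "cos (- ((w - z)/2)) = cos ((w - z)/2)" by (rule cos_minus)
    also have "z/2 + w/2 = (w + z)/2" by (simp add: field_simps)
    finally show ?thesis .
  qed
  have e3: "sin ((b - z)/2) * sin ((w - b)/2) = (cos ((w + z)/2 - b) - cos ((w - z)/2)) / 2"
  proof -
    have "sin ((b - z)/2) * sin ((w - b)/2) = (cos ((b - z)/2 - (w - b)/2) - cos ((b - z)/2 + (w - b)/2)) / 2"
      by (rule sin_times_sin)
    also have "(b - z)/2 - (w - b)/2 = - ((w + z)/2 - b)" by (simp add: field_simps)
    also have "cos (- ((w + z)/2 - b)) = cos ((w + z)/2 - b)" by (rule cos_minus)
    also have "(b - z)/2 + (w - b)/2 = (w - z)/2" by (simp add: field_simps)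
    finally show ?thesis .
  qed
  show ?thesis unfolding e1 e2 e3 by (simp add: field_simps)
qed

lemma Tf_bounds:
  assumes "0 \<le> z" "z \<le> b" "b < w" "w < 2 * pi" "0 < b"
  shows "0 \<le> Tf z w b" "Tf z w b \<le> 1" "sin ((w + z - b)/2) > 0" "sin (b/2) > 0"
proof -
  show sX: "sin ((w + z - b)/2) > 0" using assms by (intro sin_gt_zero) auto
  show sb: "sin (b/2) > 0" using assms by (intro sin_gt_zero) auto
  have sz: "sin (z/2) \<ge> 0" using assms by (intro sin_ge_zero) auto
  have sw: "sin (w/2) \<ge> 0" using assms by (intro sin_ge_zero) auto
  have s5: "sin ((b - z)/2) \<ge> 0" using assms by (intro sin_ge_zero) auto
  have s6: "sin ((w - b)/2) \<ge> 0" using assms by (intro sin_ge_zero) auto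
  have D: "sin ((w + z - b)/2) * sin (b/2) > 0" using sX sb by simp
  show "0 \<le> Tf z w b" unfolding Tf_def using D sz sw by simp
  have "sin (z/2) * sin (w/2) \<le> sin ((w + z - b)/2) * sin (b/2)"
    using sin_prod_identity[of w z b] s5 s6 by (smt (verit) mult_nonneg_nonneg)
  then show "Tf z w b \<le> 1" unfolding Tf_def using D by simp
qed

lemma Tf_neg: "Tf (-z) (-w) (-b) = Tf z w b"
proof -
  have "(- w + - z - - b)/2 = - ((w + z - b)/2)" by (simp add: field_simps)
  then show ?thesis unfolding Tf_def minus_divide_left[symmetric] sin_minus by (simp only: sin_minus mult_minus_left mult_minus_right minus_minus)
qed

lemma point_gen:
  assumes u1: "cmod u = 1" and v: "v = u * cis b" and w: "w = u * cis ww" and z: "z = u * cis zz"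
    and sX: "sin ((ww + zz - b)/2) \<noteq> 0" and sb: "sin (b/2) \<noteq> 0" and zw: "cis zz \<noteq> cis ww"
  shows "LIS u v z w = ((u * v - u * w - v * w) * z + u * v * w) / (u * v - w * z)"
    "((u * v - u * w - v * w) * z + u * v * w) / (u * v - w * z) = u + of_real (Tf zz ww b) * (v - u)"
    "u * v - w * z \<noteq> 0"
proof -
  have u0: "u \<noteq> 0" using u1 by auto
  note TC = Tf_complex[OF sX sb]
  have c1: "cmod v = 1" "cmod w = 1" "cmod z = 1" using u1 v w z by (simp_all add: norm_mult)
  have uv: "u \<noteq> v" using TC(3) u0 v by auto
  have zw': "z \<noteq> w" using zw u0 z w by auto
  have uvzw: "u * v \<noteq> z * w"
  proof
    assume "u * v = z * w"
    then have "(u * u) * cis b = (u * u) * (cis zz * cis ww)" unfolding v w z by (simp add: ac_simps)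
    then show False using TC(2) u0 by simp
  qed
  show "LIS u v z w = ((u * v - u * w - v * w) * z + u * v * w) / (u * v - w * z)"
    by (rule LIS_unit[OF u1 c1(1) c1(3) c1(2) uv zw' uvzw])
  show "u * v - w * z \<noteq> 0" using uvzw by (simp add: mult.commute)
  show "((u * v - u * w - v * w) * z + u * v * w) / (u * v - w * z) = u + of_real (Tf zz ww b) * (v - u)"
    unfolding TC(1) v w z by (rule alg_F[OF u0 TC(2) TC(3)])
qed

lemma sin_sigma: "\<sigma> = 1 \<or> \<sigma> = -1 \<Longrightarrow> sin (\<sigma> * x) = \<sigma> * sin x"
  by auto

lemma point_core:
  assumes u1: "cmod u = 1" and sg: "\<sigma> = 1 \<or> \<sigma> = -1"
    and ang: "0 < b" "b < ww" "ww < 2 * pi" "0 \<le> zz" "zz \<le> b"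
    and v: "v = u * cis (\<sigma> * b)" and w: "w = u * cis (\<sigma> * ww)" and z: "z = u * cis (\<sigma> * zz)"
  shows "LIS u v z w = ((u * v - u * w - v * w) * z + u * v * w) / (u * v - w * z)"
    "((u * v - u * w - v * w) * z + u * v * w) / (u * v - w * z) = u + of_real (Tf zz ww b) * (v - u)"
    "u * v - w * z \<noteq> 0" "0 \<le> Tf zz ww b" "Tf zz ww b \<le> 1"
proof -
  note TB = Tf_bounds[OF ang(4,5,2,3,1)]
  have e1: "(\<sigma> * ww + \<sigma> * zz - \<sigma> * b)/2 = \<sigma> * ((ww + zz - b)/2)" by (simp add: field_simps)
  have e2: "\<sigma> * b / 2 = \<sigma> * (b / 2)" by simp
  have sX: "sin ((\<sigma> * ww + \<sigma> * zz - \<sigma> * b)/2) \<noteq> 0" unfolding e1 sin_sigma[OF sg] using TB(3) sg by auto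
  have sb: "sin (\<sigma> * b/2) \<noteq> 0" unfolding e2 sin_sigma[OF sg] using TB(4) sg by auto
  have zw: "cis (\<sigma> * zz) \<noteq> cis (\<sigma> * ww)"
    by (rule cis_neq) (use sg ang in auto)
  have Tsig: "Tf (\<sigma> * zz) (\<sigma> * ww) (\<sigma> * b) = Tf zz ww b" using sg Tf_neg by auto
  note P = point_gen[OF u1 v w z sX sb zw]
  show "LIS u v z w = ((u * v - u * w - v * w) * z + u * v * w) / (u * v - w * z)" by (rule P(1))
  show "((u * v - u * w - v * w) * z + u * v * w) / (u * v - w * z) = u + of_real (Tf zz ww b) * (v - u)"
    using P(2) unfolding Tsig .
  show "u * v - w * z \<noteq> 0" by (rule P(3))
  show "0 \<le> Tf zz ww b" "Tf zz ww b \<le> 1" using TB by auto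
qed

lemma cis_2pi_minus: "cis (2 * pi - x) = cis (- x)"
  by (simp add: complex_eq_iff)

lemma norm_ucis: "cmod u = 1 \<Longrightarrow> cmod (u * cis x) = 1"
  by (simp add: norm_mult)

lemma arc_ccw_param:
  assumes u1: "cmod u = 1" and b: "0 < b" "b < 2 * pi" and v: "v = u * cis b"
  shows "arc_ccw u v = (\<lambda>t. u * cis t) ` {0..b}"
proof -
  have u0: "u \<noteq> 0" using u1 by auto
  show ?thesis
  proof (intro set_eqI iffI)
    fix z assume "z \<in> arc_ccw u v"
    then have "z = u \<or> z = v \<or> ccw3 u z v" unfolding arc_ccw_def by auto
    then show "z \<in> (\<lambda>t. u * cis t) ` {0..b}"
    proof (elim disjE)
      assume "z = u" then show ?thesis using b by (intro image_eqI[of _ _ 0]) auto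
    next
      assume "z = v" then show ?thesis using b v by (intro image_eqI[of _ _ b]) auto
    next
      assume "ccw3 u z v"
      then obtain s t where st: "0 < s" "s < t" "t < 2 * pi" "z = u * cis s" "v = u * cis t"
        unfolding ccw3_def by auto
      have "cis t = cis b" using st(5) v u0 by simp
      then have "t = b" using st b by (intro cis_inj) (auto simp: abs_less_iff)
      then show ?thesis using st by (intro image_eqI[of _ _ s]) auto
    qed
  next
    fix z assume "z \<in> (\<lambda>t. u * cis t) ` {0..b}"
    then obtain t where t: "0 \<le> t" "t \<le> b" "z = u * cis t" by auto
    have "z = u \<or> z = v \<or> ccw3 u z v"
    proof (cases "t = 0 \<or> t = b")
      case True then show ?thesis using t v by auto
    next
      case False then have "ccw3 u z v" unfolding ccw3_def
        by (intro conjI exI[of _ t] exI[of _ b]) (use u1 t v b in auto)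
      then show ?thesis by simp
    qed
    then show "z \<in> arc_ccw u v" unfolding arc_ccw_def using t norm_ucis[OF u1] by auto
  qed
qed

lemma arc_param:
  assumes circ: "cmod u = 1" "cmod c = 1" "cmod d = 1" "cmod v = 1" "cmod w = 1"
    and ord: "in_order5 u c d v w"
  shows "\<exists>\<sigma> b g dd ww. (\<sigma> = 1 \<or> \<sigma> = -1) \<and> 0 < g \<and> g < dd \<and> dd < b \<and> b < ww \<and> ww < 2 * pi \<and>
     c = u * cis (\<sigma> * g) \<and> d = u * cis (\<sigma> * dd) \<and> v = u * cis (\<sigma> * b) \<and> w = u * cis (\<sigma> * ww) \<and>
     arc_containing u v c = (\<lambda>t. u * cis (\<sigma> * t)) ` {0..b}"
  using ord unfolding in_order5_def
proof (elim disjE)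
  assume "ccw5 u c d v w"
  then obtain s2 s3 s4 s5 where s: "0 < s2" "s2 < s3" "s3 < s4" "s4 < s5" "s5 < 2 * pi"
    "c = u * cis s2" "d = u * cis s3" "v = u * cis s4" "w = u * cis s5"
    unfolding ccw5_def by blast
  have "ccw3 u c v" unfolding ccw3_def
    by (intro conjI exI[of _ s2] exI[of _ s4]) (use circ s in auto)
  then have "arc_containing u v c = (\<lambda>t. u * cis t) ` {0..s4}"
    unfolding arc_containing_def using arc_ccw_param[OF circ(1), of s4 v] s by auto
  moreover have "c = u * cis (1 * s2) \<and> d = u * cis (1 * s3) \<and> v = u * cis (1 * s4) \<and> w = u * cis (1 * s5)"
    using s(6-9) by (simp only: mult_1)
  ultimately show ?thesis using s(1-5)
    by (intro exI[of _ 1] exI[of _ s4] exI[of _ s2] exI[of _ s3] exI[of _ s5]) simp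
next
  assume "ccw5 w v d c u"
  then obtain s2 s3 s4 s5 where s: "0 < s2" "s2 < s3" "s3 < s4" "s4 < s5" "s5 < 2 * pi"
    "v = w * cis s2" "d = w * cis s3" "c = w * cis s4" "u = w * cis s5"
    unfolding ccw5_def by blast
  have w0: "w \<noteq> 0" using circ by auto
  have wu: "w = u * cis (- s5)" unfolding s(9) mult.assoc cis_mult by simp
  have cis_eq: "w * cis x = u * cis (- (s5 - x))" for x unfolding wu mult.assoc cis_mult by simp
  have vv: "v = u * cis (- (s5 - s2))" "d = u * cis (- (s5 - s3))" "c = u * cis (- (s5 - s4))"
    using cis_eq[of s2] cis_eq[of s3] cis_eq[of s4] s(6,7,8) by simp_all
  have uv: "u = v * cis (s5 - s2)" unfolding s(6,9) mult.assoc cis_mult by simp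
  have nccw: "\<not> ccw3 u c v"
  proof
    assume "ccw3 u c v"
    then obtain s t where st: "0 < s" "s < t" "t < 2 * pi" "c = u * cis s" "v = u * cis t"
      unfolding ccw3_def by auto
    have u0: "u \<noteq> 0" using circ by auto
    have "cis s = cis (2 * pi - (s5 - s4))" using st(4) vv(3) u0 unfolding cis_2pi_minus by simp
    then have 1: "s = 2 * pi - (s5 - s4)" using st s by (intro cis_inj) (auto simp: abs_less_iff)
    have "cis t = cis (2 * pi - (s5 - s2))" using st(5) vv(1) u0 unfolding cis_2pi_minus by simp
    then have 2: "t = 2 * pi - (s5 - s2)" using st s by (intro cis_inj) (auto simp: abs_less_iff)
    show False using 1 2 st s by linarith
  qed
  then have "arc_containing u v c = arc_ccw v u" unfolding arc_containing_def by simp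
  also have "\<dots> = (\<lambda>t. v * cis t) ` {0..s5 - s2}" by (rule arc_ccw_param[OF circ(4)]) (use uv s in auto)
  also have "\<dots> = (\<lambda>t. u * cis (- 1 * t)) ` {0..s5 - s2}"
  proof (intro set_eqI iffI)
    fix z assume "z \<in> (\<lambda>t. v * cis t) ` {0..s5 - s2}"
    then obtain t where t: "0 \<le> t" "t \<le> s5 - s2" "z = v * cis t" by auto
    have "z = u * cis (- 1 * (s5 - s2 - t))" unfolding t(3) vv(1) mult.assoc cis_mult by (simp add: algebra_simps)
    then show "z \<in> (\<lambda>t. u * cis (- 1 * t)) ` {0..s5 - s2}" using t by (intro image_eqI[of _ _ "s5 - s2 - t"]) auto
  next
    fix z assume "z \<in> (\<lambda>t. u * cis (- 1 * t)) ` {0..s5 - s2}"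
    then obtain t where t: "0 \<le> t" "t \<le> s5 - s2" "z = u * cis (- 1 * t)" by auto
    have "z = v * cis (s5 - s2 - t)" unfolding t(3) vv(1) mult.assoc cis_mult by (simp add: algebra_simps)
    then show "z \<in> (\<lambda>t. v * cis t) ` {0..s5 - s2}" using t by (intro image_eqI[of _ _ "s5 - s2 - t"]) auto
  qed
  finally have A: "arc_containing u v c = (\<lambda>t. u * cis (- 1 * t)) ` {0..s5 - s2}" .
  have "c = u * cis (- 1 * (s5 - s4)) \<and> d = u * cis (- 1 * (s5 - s3)) \<and> v = u * cis (- 1 * (s5 - s2)) \<and> w = u * cis (- 1 * s5)"
    using vv wu by (simp only: mult_minus1)
  then show ?thesis using s(1-5) A
    by (intro exI[of _ "-1"] exI[of _ "s5 - s2"] exI[of _ "s5 - s4"] exI[of _ "s5 - s3"] exI[of _ s5]) simp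
qed

lemma F_minus:
  fixes u v w z :: complex
  assumes D: "u * v - w * z \<noteq> 0"
  shows "u - ((u * v - u * w - v * w) * z + u * v * w) / (u * v - w * z) = v * (u - z) * (u - w) / (u * v - w * z)"
    "((u * v - u * w - v * w) * z + u * v * w) / (u * v - w * z) - v = - (u * (v - z) * (v - w)) / (u * v - w * z)"
proof -
  have "u - ((u * v - u * w - v * w) * z + u * v * w) / (u * v - w * z)
      = (u * (u * v - w * z) - ((u * v - u * w - v * w) * z + u * v * w)) / (u * v - w * z)"
    by (rule diff_divide_eq_iff[OF D])
  also have "u * (u * v - w * z) - ((u * v - u * w - v * w) * z + u * v * w) = v * (u - z) * (u - w)" by algebra
  finally show "u - ((u * v - u * w - v * w) * z + u * v * w) / (u * v - w * z) = v * (u - z) * (u - w) / (u * v - w * z)" .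
  have "((u * v - u * w - v * w) * z + u * v * w) / (u * v - w * z) - v
      = (((u * v - u * w - v * w) * z + u * v * w) - v * (u * v - w * z)) / (u * v - w * z)"
    by (rule divide_diff_eq_iff[OF D])
  also have "((u * v - u * w - v * w) * z + u * v * w) - v * (u * v - w * z) = - (u * (v - z) * (v - w))" by algebra
  finally show "((u * v - u * w - v * w) * z + u * v * w) / (u * v - w * z) - v = - (u * (v - z) * (v - w)) / (u * v - w * z)" .
qed

lemma real_frac4:
  fixes A B C E P R Q S :: real
  assumes "P \<noteq> 0" "R \<noteq> 0" "Q \<noteq> 0" "S \<noteq> 0"
  shows "(A * P / Q) * (B * R / S) / ((C * P / S) * (E * R / Q)) = (A * B) / (C * E)"
proof (cases "C * E = 0")
  case True then show ?thesis by auto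
next
  case False then show ?thesis using assms by (simp add: field_simps)
qed

lemma cross_ratio_F:
  fixes u v w c d :: complex
  assumes u1: "cmod u = 1" "cmod v = 1" and Dc: "u * v - w * c \<noteq> 0" and Dd: "u * v - w * d \<noteq> 0"
    and uw: "u \<noteq> w" and vw: "v \<noteq> w"
  shows "abs_cross_ratio u (((u * v - u * w - v * w) * c + u * v * w) / (u * v - w * c))
                          (((u * v - u * w - v * w) * d + u * v * w) / (u * v - w * d)) v
       = abs_cross_ratio u c d v"
proof -
  note Fc = F_minus[OF Dc] and Fd = F_minus[OF Dd]
  have n1: "cmod (u - w) \<noteq> 0" "cmod (v - w) \<noteq> 0" "cmod (u * v - w * c) \<noteq> 0" "cmod (u * v - w * d) \<noteq> 0"
    using uw vw Dc Dd by auto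
  have "abs_cross_ratio u (((u * v - u * w - v * w) * c + u * v * w) / (u * v - w * c))
                          (((u * v - u * w - v * w) * d + u * v * w) / (u * v - w * d)) v
     = (cmod (u - d) * cmod (u - w) / cmod (u * v - w * d)) * (cmod (v - c) * cmod (v - w) / cmod (u * v - w * c))
       / ((cmod (u - c) * cmod (u - w) / cmod (u * v - w * c)) * (cmod (v - d) * cmod (v - w) / cmod (u * v - w * d)))"
    unfolding abs_cross_ratio_def Fc Fd using u1 by (simp add: norm_mult norm_divide norm_minus_commute)
  also have "\<dots> = (cmod (u - d) * cmod (v - c)) / (cmod (u - c) * cmod (v - d))"
    by (rule real_frac4[OF n1(1,2,4,3)])
  also have "\<dots> = abs_cross_ratio u c d v" unfolding abs_cross_ratio_def by (simp add: norm_minus_commute)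
  finally show ?thesis .
qed

lemma parallel_uv:
  assumes u1: "cmod u = 1" "cmod v = 1" "cmod c = 1" "cmod d = 1" and uv: "u \<noteq> v"
    and par: "parallel_lines u v c d"
  shows "u * v = c * d"
proof -
  obtain k :: real where k: "v - u = of_real k * (d - c)" using par unfolding parallel_lines_def by auto
  have cu: "cnj u = 1/u" "cnj v = 1/v" "cnj c = 1/c" "cnj d = 1/d" using unit_cnj u1 by auto
  have n0: "u \<noteq> 0" "v \<noteq> 0" "c \<noteq> 0" "d \<noteq> 0" using u1 by auto
  have "cnj (v - u) = of_real k * cnj (d - c)" using k by simp
  then have "1/v - 1/u = of_real k * (1/d - 1/c)" by (simp add: cu)
  then have "(u - v) / (u * v) = of_real k * ((c - d) / (c * d))" using n0 by (simp add: field_simps)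
  also have "\<dots> = (of_real k * (c - d)) / (c * d)" by simp
  also have "of_real k * (c - d) = u - v" using k by (simp add: algebra_simps)
  finally have "(u - v) / (u * v) = (u - v) / (c * d)" .
  then show ?thesis using uv n0 by (simp add: field_simps)
qed

lemma parallel_formula:
  fixes u v w c d :: complex
  assumes p: "u * v = c * d" and c0: "c \<noteq> 0" and dw: "d \<noteq> w"
  shows "((u * v - u * w - v * w) * c + u * v * w) / (u * v - w * c) = ((u + v - d) * w - c * d) / (w - d)"
proof -
  have D1: "u * v - w * c \<noteq> 0"
  proof
    assume "u * v - w * c = 0"
    then have "c * (d - w) = 0" using p by algebra
    then show False using c0 dw by simp
  qed
  have D2: "w - d \<noteq> 0" using dw by simp
  have "((u * v - u * w - v * w) * c + u * v * w) * (w - d) = ((u + v - d) * w - c * d) * (u * v - w * c)"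
    using p by algebra
  then show ?thesis using D1 D2 by (simp add: frac_eq_eq)
qed

lemma seg_mem: "0 \<le> T \<Longrightarrow> T \<le> 1 \<Longrightarrow> u + complex_of_real T * (v - u) \<in> closed_segment u v"
  unfolding closed_segment_def
  by (rule CollectI, rule exI[of _ T]) (simp add: scaleR_conv_of_real algebra_simps)

lemma Tf_cont:
  assumes "0 < b" "b < ww" "ww < 2 * pi"
  shows "continuous_on {0..b} (\<lambda>t. Tf t ww b)"
proof -
  have "sin ((ww + t - b)/2) * sin (b/2) \<noteq> 0" if "t \<in> {0..b}" for t
  proof -
    have "0 \<le> t" "t \<le> b" using that by auto
    note TB = Tf_bounds[OF this assms(2,3,1)]
    show ?thesis using TB(3,4) by simp
  qed
  then show ?thesis unfolding Tf_def by (intro continuous_intros) auto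
qed

theorem lemma3p12:
  fixes u c d v w a b :: complex
  assumes circ: "cmod u = 1" "cmod c = 1" "cmod d = 1" "cmod v = 1" "cmod w = 1"
    and ord: "in_order5 u c d v w"
    and a_def: "a = LIS u v c w"
    and b_def: "b = LIS u v d w"
  shows "abs_cross_ratio u a b v = abs_cross_ratio u c d v
       \<and> ((\<lambda>z. LIS u v z w) ` arc_containing u v c = closed_segment u v
         \<and> c \<in> arc_containing u v c \<and> d \<in> arc_containing u v c
         \<and> (u * v - u * w - v * w) * (u * v) - u * v * w * (- w) \<noteq> 0
         \<and> (\<forall>z \<in> arc_containing u v c.
               LIS u v z w = ((u * v - u * w - v * w) * z + u * v * w) / (- w * z + u * v))
         \<and> LIS u v u w = u \<and> LIS u v v w = v \<and> a = LIS u v c w \<and> b = LIS u v d w)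
       \<and> (parallel_lines u v c d \<longrightarrow>
           u * v = c * d \<and> a = ((u + v - d) * w - c * d) / (w - d)
                         \<and> b = ((u + v - c) * w - c * d) / (w - c))"
proof -
  obtain \<sigma> bb g dd ww where sg: "\<sigma> = 1 \<or> \<sigma> = -1"
    and ang: "0 < g" "g < dd" "dd < bb" "bb < ww" "ww < 2 * pi"
    and ce: "c = u * cis (\<sigma> * g)" and de: "d = u * cis (\<sigma> * dd)"
    and ve: "v = u * cis (\<sigma> * bb)" and we: "w = u * cis (\<sigma> * ww)"
    and Ae: "arc_containing u v c = (\<lambda>t. u * cis (\<sigma> * t)) ` {0..bb}"
    using arc_param[OF circ ord] by blast
  have b0: "0 < bb" using ang by linarith
  define F where "F z = ((u * v - u * w - v * w) * z + u * v * w) / (u * v - w * z)" for z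
  have pt: "LIS u v (u * cis (\<sigma> * t)) w = F (u * cis (\<sigma> * t))"
    "F (u * cis (\<sigma> * t)) = u + of_real (Tf t ww bb) * (v - u)"
    "u * v - w * (u * cis (\<sigma> * t)) \<noteq> 0" "0 \<le> Tf t ww bb" "Tf t ww bb \<le> 1"
    if "0 \<le> t" "t \<le> bb" for t
    using point_core[OF circ(1) sg b0 ang(4,5) that ve we refl] unfolding F_def by auto
  have Fe: "- w * z + u * v = u * v - w * z" for z by simp
  have u0: "u \<noteq> 0" using circ by auto
  have uw: "u \<noteq> w"
  proof -
    have "cis (\<sigma> * ww) \<noteq> cis 0" by (rule cis_neq) (use sg ang in auto)
    then show ?thesis using we u0 by auto
  qed
  have vw: "v \<noteq> w"
  proof -
    have "cis (\<sigma> * bb) \<noteq> cis (\<sigma> * ww)" by (rule cis_neq) (use sg ang in auto)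
    then show ?thesis using we ve u0 by auto
  qed
  have dw: "d \<noteq> w"
  proof -
    have "cis (\<sigma> * dd) \<noteq> cis (\<sigma> * ww)" by (rule cis_neq) (use sg ang in auto)
    then show ?thesis using we de u0 by auto
  qed
  have cw: "c \<noteq> w"
  proof -
    have "cis (\<sigma> * g) \<noteq> cis (\<sigma> * ww)" by (rule cis_neq) (use sg ang in auto)
    then show ?thesis using we ce u0 by auto
  qed
  have uv: "u \<noteq> v"
  proof -
    have "cis (\<sigma> * bb) \<noteq> cis 0" by (rule cis_neq) (use sg ang in auto)
    then show ?thesis using ve u0 by auto
  qed
  have pc: "LIS u v c w = F c" "u * v - w * c \<noteq> 0" using pt[of g] ang ce by auto
  have pd: "LIS u v d w = F d" "u * v - w * d \<noteq> 0" using pt[of dd] ang de by auto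
  have pu: "LIS u v u w = u" using pt[of 0] b0 by (simp add: Tf_def)
  have Tb: "Tf bb ww bb = 1"
  proof -
    have "sin (ww / 2) > 0" by (rule sin_gt_zero) (use ang in auto)
    moreover have "sin (bb / 2) > 0" by (rule sin_gt_zero) (use ang in auto)
    ultimately have "sin (ww / 2) \<noteq> 0" "sin (bb / 2) \<noteq> 0" by auto
    then show ?thesis unfolding Tf_def by simp
  qed
  have pv: "LIS u v v w = v" using pt[of bb] b0 ve Tb by simp
  have cin: "c \<in> arc_containing u v c" unfolding Ae by (rule image_eqI[of _ _ g]) (use ang ce in auto)
  have din: "d \<in> arc_containing u v c" unfolding Ae by (rule image_eqI[of _ _ dd]) (use ang de in auto)
  have formula: "\<forall>z \<in> arc_containing u v c.
               LIS u v z w = ((u * v - u * w - v * w) * z + u * v * w) / (- w * z + u * v)"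
    unfolding Ae Fe using pt(1) unfolding F_def by auto
  have nd: "(u * v - u * w - v * w) * (u * v) - u * v * w * (- w) \<noteq> 0"
  proof -
    have "(u * v - u * w - v * w) * (u * v) - u * v * w * (- w) = u * v * ((u - w) * (v - w))" by algebra
    moreover have "u * v * ((u - w) * (v - w)) \<noteq> 0" using uw vw circ by auto
    ultimately show ?thesis by simp
  qed
  have img: "(\<lambda>z. LIS u v z w) ` arc_containing u v c = closed_segment u v"
  proof (intro set_eqI iffI)
    fix p assume "p \<in> (\<lambda>z. LIS u v z w) ` arc_containing u v c"
    then obtain t where t: "0 \<le> t" "t \<le> bb" "p = LIS u v (u * cis (\<sigma> * t)) w" unfolding Ae by auto
    then show "p \<in> closed_segment u v" using pt[OF t(1,2)] seg_mem by simp
  next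
    fix p assume "p \<in> closed_segment u v"
    then obtain T where T: "0 \<le> T" "T \<le> 1" "p = (1 - T) *\<^sub>R u + T *\<^sub>R v"
      unfolding closed_segment_def by auto
    have g0: "Tf 0 ww bb = 0" by (simp add: Tf_def)
    obtain t where t: "0 \<le> t" "t \<le> bb" "Tf t ww bb = T"
      using IVT'[of "\<lambda>t. Tf t ww bb" 0 T bb] g0 Tb T b0 Tf_cont[OF b0 ang(4,5)] by auto
    have e1: "LIS u v (u * cis (\<sigma> * t)) w = u + of_real T * (v - u)" using pt(1,2)[OF t(1,2)] t(3) by simp
    have e2: "p = u + of_real T * (v - u)" using T(3) by (simp add: scaleR_conv_of_real algebra_simps)
    have "p = LIS u v (u * cis (\<sigma> * t)) w" using e1 e2 by simp
    moreover have "u * cis (\<sigma> * t) \<in> arc_containing u v c" unfolding Ae using t by auto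
    ultimately show "p \<in> (\<lambda>z. LIS u v z w) ` arc_containing u v c" by auto
  qed
  have cr: "abs_cross_ratio u a b v = abs_cross_ratio u c d v"
    unfolding a_def b_def pc(1) pd(1) unfolding F_def
    by (rule cross_ratio_F[OF circ(1) circ(4) pc(2) pd(2) uw vw])
  have par: "parallel_lines u v c d \<longrightarrow>
           u * v = c * d \<and> a = ((u + v - d) * w - c * d) / (w - d)
                         \<and> b = ((u + v - c) * w - c * d) / (w - c)"
  proof
    assume "parallel_lines u v c d"
    then have p: "u * v = c * d" using parallel_uv circ uv by blast
    have c0: "c \<noteq> 0" "d \<noteq> 0" using circ by auto
    have "a = ((u + v - d) * w - c * d) / (w - d)"
      unfolding a_def pc(1) F_def by (rule parallel_formula[OF p c0(1) dw])
    moreover have "b = ((u + v - c) * w - d * c) / (w - c)"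
      unfolding b_def pd(1) F_def by (rule parallel_formula[OF _ c0(2) cw]) (use p in \<open>simp add: mult.commute\<close>)
    ultimately show "u * v = c * d \<and> a = ((u + v - d) * w - c * d) / (w - d)
                         \<and> b = ((u + v - c) * w - c * d) / (w - c)" using p by (simp add: mult.commute)
  qed
  show ?thesis using cr img cin din nd formula pu pv a_def b_def par by blast
qed

end
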